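(* Let $\Phi=(V,Q,\mathcal{C})$ be a CSP formula with atomic constraints and $h=(h_v)_{v\in V}$ a projection scheme satisfying the entropy criterion with parameters $0<\beta<\alpha<1$. Let $q_v=|Q_v|$, $D$ the maximum degree of the dependency graph, and $p=\max_{c\in\mathcal{C}}\prod_{v\in\mathrm{vbl}(c)}\frac1{q_v}$. Let $X,Y\in\Sigma=\bigotimes_v\Sigma_v$ differ only at a variable $v_0$, and let $v^\star\in V\setminus\{v_0\}$; define $\Phi^X,\Phi^Y$ as in the context. If $\log\frac1p\ge\frac{55}{\beta}(\log D+3)$, then there exist projection schemes $h^X$ for $\Phi^X$ and $h^Y$ for $\Phi^Y$ satisfying the coupling projection condition.
   Context: A CSP formula: variables $V$ with finite domains $Q_v$ ($|Q_v|\ge2$), constraints $c$ on $\mathrm{vbl}(c)\subseteq V$; atomic means violated by exactly one configuration. Dependency graph: vertices $\mathcal{C}$, adjacency iff variable sets intersect. Projection scheme $h_v:Q_v\to\Sigma_v$, $s_v=|\Sigma_v|$. Entropy criterion with $(\alpha,\beta)$: $\lfloor q_v/s_v\rfloor\le|h_v^{-1}(y)|\le\lceil q_v/s_v\rceil$ for all $v,y$; and for each $c$: $\sum_{v\in\mathrm{vbl}(c)}\log\lceil q_v/s_v\rceil\le\alpha\sum_{v\in\mathrm{vbl}(c)}\log q_v$, $\sum_{v\in\mathrm{vbl}(c)}\log\lfloor q_v/s_v\rfloor\ge\beta\sum_{v\in\mathrm{vbl}(c)}\log q_v$. The formulas $\Phi^X=(V,(Q^X_u)_u,\mathcal{C})$,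 $\Phi^Y=(V,(Q^Y_u)_u,\mathcal{C})$ have the same constraints as $\Phi$ and domains $Q^X_u=h_u^{-1}(X_u)$, $Q^Y_u=h_u^{-1}(Y_u)$ for $u\ne v^\star$, and $Q^X_{v^\star}=Q^Y_{v^\star}=Q_{v^\star}$. Write $q^X_v=|Q^X_v|$, $q^Y_v=|Q^Y_v|$. Projection schemes $h^X=(h^X_v)$, $h^X_v:Q^X_v\to\Sigma^X_v$, and $h^Y=(h^Y_v)$, $h^Y_v:Q^Y_v\to\Sigma^Y_v$, with $s^X_v=|\Sigma^X_v|$, $s^Y_v=|\Sigma^Y_v|$, satisfy the coupling projection condition if: (i) both are balanced: $\lfloor q^X_v/s^X_v\rfloor\le|(h^X_v)^{-1}(y)|\le\lceil q^X_v/s^X_v\rceil$ for all $v,y\in\Sigma^X_v$, and similarly for $Y$; (ii) $\Sigma^X_{v_0}=\Sigma^Y_{v_0}$ and $h^X_u=h^Y_u$ for all $u\ne v_0$; (iii) $h^X_{v^\star}=h^Y_{v^\star}=h_{v^\star}$; (iv) for every $c\in\mathcal{C}$, $\min\big(\sum_{v\in\mathrm{vbl}(c)}\log\lfloor q^X_v/s^X_v\rfloor,\sum_{v\in\mathrm{vbl}(c)}\log\lfloor q^Y_v/s^Y_v\rfloor\big)\ge\frac\beta{10}\sum_{v\in\mathrm{vbl}(c)}\log q_v$; (v) for every $c$ with $v^\star\notin\mathrm{vbl}(c)$, $\min\big(\sum_{v\in\mathrm{vbl}(c)}\log\frac{q^X_v}{\lceil q^X_v/s^X_v\rceil},\sum_{v\in\mathrm{vbl}(c)}\log\frac{q^Y_v}{\lceil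 q^Y_v/s^Y_v\rceil}\big)\ge\frac\beta{10}\sum_{v\in\mathrm{vbl}(c)}\log q_v$; (vi) for every $c$ with $v^\star\in\mathrm{vbl}(c)$, $\min_{Z\in\{X,Y\}}\big(\log\lfloor q^Z_{v^\star}/s^Z_{v^\star}\rfloor+\sum_{v\in\mathrm{vbl}(c)\setminus\{v^\star\}}\log\frac{q^Z_v}{\lceil q^Z_v/s^Z_v\rceil}\big)\ge\frac\beta{10}\sum_{v\in\mathrm{vbl}(c)}\log q_v$. $\log$ base 2. *)

theory Defs
  imports Complex_Main "HOL-Library.FuncSet"
begin

definition csp_formula ::
  "'v set \<Rightarrow> ('v \<Rightarrow> 'a set) \<Rightarrow> 'c set \<Rightarrow> ('c \<Rightarrow> 'v set) \<Rightarrow> ('c \<Rightarrow> ('v \<Rightarrow> 'a) \<Rightarrow> bool) \<Rightarrow> bool"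
  where "csp_formula V Q C vbl sat \<longleftrightarrow>
    finite V \<and> (\<forall>v\<in>V. finite (Q v) \<and> card (Q v) \<ge> 2) \<and> finite C \<and> (\<forall>c\<in>C. vbl c \<subseteq> V)"

definition atomic_constraints ::
  "('v \<Rightarrow> 'a set) \<Rightarrow> 'c set \<Rightarrow> ('c \<Rightarrow> 'v set) \<Rightarrow> ('c \<Rightarrow> ('v \<Rightarrow> 'a) \<Rightarrow> bool) \<Rightarrow> bool"
  where "atomic_constraints Q C vbl sat \<longleftrightarrow>
    (\<forall>c\<in>C. card {\<sigma> \<in> PiE (vbl c) Q. \<not> sat c \<sigma>} = 1)"

definition dep_degree :: "'c set \<Rightarrow> ('c \<Rightarrow> 'v set) \<Rightarrow> 'c \<Rightarrow> nat"
  where "dep_degree C vbl c = card {c' \<in> C. c' \<noteq> c \<and> vbl c \<inter> vbl c' \<noteq> {}}"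

definition max_degree :: "'c set \<Rightarrow> ('c \<Rightarrow> 'v set) \<Rightarrow> nat"
  where "max_degree C vbl = Max (dep_degree C vbl ` C)"

definition viol_prob :: "('v \<Rightarrow> 'a set) \<Rightarrow> 'c set \<Rightarrow> ('c \<Rightarrow> 'v set) \<Rightarrow> real"
  where "viol_prob Q C vbl = Max ((\<lambda>c. \<Prod>v\<in>vbl c. 1 / real (card (Q v))) ` C)"

definition proj_scheme :: "'v set \<Rightarrow> ('v \<Rightarrow> 'a set) \<Rightarrow> ('v \<Rightarrow> 's set) \<Rightarrow> ('v \<Rightarrow> 'a \<Rightarrow> 's) \<Rightarrow> bool"
  where "proj_scheme V Q \<Sigma> h \<longleftrightarrow> (\<forall>v\<in>V. finite (\<Sigma> v) \<and> (\<forall>x\<in>Q v. h v x \<in> \<Sigma> v))"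

definition flo :: "('v \<Rightarrow> 'a set) \<Rightarrow> ('v \<Rightarrow> 's set) \<Rightarrow> 'v \<Rightarrow> int"
  where "flo Q \<Sigma> v = \<lfloor>real (card (Q v)) / real (card (\<Sigma> v))\<rfloor>"

definition cei :: "('v \<Rightarrow> 'a set) \<Rightarrow> ('v \<Rightarrow> 's set) \<Rightarrow> 'v \<Rightarrow> int"
  where "cei Q \<Sigma> v = \<lceil>real (card (Q v)) / real (card (\<Sigma> v))\<rceil>"

definition balanced :: "'v set \<Rightarrow> ('v \<Rightarrow> 'a set) \<Rightarrow> ('v \<Rightarrow> 's set) \<Rightarrow> ('v \<Rightarrow> 'a \<Rightarrow> 's) \<Rightarrow> bool"
  where "balanced V Q \<Sigma> h \<longleftrightarrow> (\<forall>v\<in>V. \<forall>y\<in>\<Sigma> v.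
     flo Q \<Sigma> v \<le> int (card {x \<in> Q v. h v x = y}) \<and> int (card {x \<in> Q v. h v x = y}) \<le> cei Q \<Sigma> v)"

text \<open>With the paper's convention
log 0 = -infinity, the lower-bound inequality forces every floor(q_v/s_v), v in vbl c,
to be positive; this is made explicit since in Isabelle log 0 = 0.\<close>
definition entropy_criterion ::
  "'v set \<Rightarrow> ('v \<Rightarrow> 'a set) \<Rightarrow> 'c set \<Rightarrow> ('c \<Rightarrow> 'v set) \<Rightarrow> ('v \<Rightarrow> 's set) \<Rightarrow> ('v \<Rightarrow> 'a \<Rightarrow> 's)
    \<Rightarrow> real \<Rightarrow> real \<Rightarrow> bool"
  where "entropy_criterion V Q C vbl \<Sigma> h \<alpha> \<beta> \<longleftrightarrow> balanced V Q \<Sigma> h \<and>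
    (\<forall>c\<in>C.
      (\<Sum>v\<in>vbl c. log 2 (real_of_int (cei Q \<Sigma> v))) \<le> \<alpha> * (\<Sum>v\<in>vbl c. log 2 (real (card (Q v)))) \<and>
      (\<forall>v\<in>vbl c. flo Q \<Sigma> v \<ge> 1) \<and>
      (\<Sum>v\<in>vbl c. log 2 (real_of_int (flo Q \<Sigma> v))) \<ge> \<beta> * (\<Sum>v\<in>vbl c. log 2 (real (card (Q v)))))"

definition restr_dom :: "('v \<Rightarrow> 'a set) \<Rightarrow> ('v \<Rightarrow> 'a \<Rightarrow> 's) \<Rightarrow> ('v \<Rightarrow> 's) \<Rightarrow> 'v \<Rightarrow> 'v \<Rightarrow> 'a set"
  where "restr_dom Q h Z vs u = (if u = vs then Q u else {x \<in> Q u. h u x = Z u})"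

text \<open>Again log 0 = -infinity in the paper,
so condition (iv) forces the floors to be positive (made explicit); this also makes all
arguments of logarithms in (v),(vi) positive.\<close>
definition coupling_condition ::
  "'v set \<Rightarrow> ('v \<Rightarrow> 'a set) \<Rightarrow> 'c set \<Rightarrow> ('c \<Rightarrow> 'v set) \<Rightarrow> ('v \<Rightarrow> 's set) \<Rightarrow> ('v \<Rightarrow> 'a \<Rightarrow> 's)
    \<Rightarrow> real \<Rightarrow> 'v \<Rightarrow> 'v \<Rightarrow> ('v \<Rightarrow> 'a set) \<Rightarrow> ('v \<Rightarrow> 'a set)
    \<Rightarrow> ('v \<Rightarrow> 's set) \<Rightarrow> ('v \<Rightarrow> 'a \<Rightarrow> 's) \<Rightarrow> ('v \<Rightarrow> 's set) \<Rightarrow> ('v \<Rightarrow> 'a \<Rightarrow> 's) \<Rightarrow> bool"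
  where "coupling_condition V Q C vbl \<Sigma> h \<beta> v0 vs QX QY \<Sigma>X hX \<Sigma>Y hY \<longleftrightarrow>
    \<comment> \<open>(i)\<close>
    balanced V QX \<Sigma>X hX \<and> balanced V QY \<Sigma>Y hY \<and>
    \<comment> \<open>(ii)\<close>
    \<Sigma>X v0 = \<Sigma>Y v0 \<and>
    (\<forall>u\<in>V. u \<noteq> v0 \<longrightarrow> \<Sigma>X u = \<Sigma>Y u \<and> (\<forall>x\<in>QX u. hX u x = hY u x)) \<and>
    \<comment> \<open>(iii)\<close>
    \<Sigma>X vs = \<Sigma> vs \<and> \<Sigma>Y vs = \<Sigma> vs \<and> (\<forall>x\<in>Q vs. hX vs x = h vs x \<and> hY vs x = h vs x) \<and>
    \<comment> \<open>(iv)\<close>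
    (\<forall>c\<in>C. (\<forall>v\<in>vbl c. flo QX \<Sigma>X v \<ge> 1 \<and> flo QY \<Sigma>Y v \<ge> 1) \<and>
       min (\<Sum>v\<in>vbl c. log 2 (real_of_int (flo QX \<Sigma>X v)))
           (\<Sum>v\<in>vbl c. log 2 (real_of_int (flo QY \<Sigma>Y v)))
         \<ge> \<beta> / 10 * (\<Sum>v\<in>vbl c. log 2 (real (card (Q v))))) \<and>
    \<comment> \<open>(v)\<close>
    (\<forall>c\<in>C. vs \<notin> vbl c \<longrightarrow>
       min (\<Sum>v\<in>vbl c. log 2 (real (card (QX v)) / real_of_int (cei QX \<Sigma>X v)))
           (\<Sum>v\<in>vbl c. log 2 (real (card (QY v)) / real_of_int (cei QY \<Sigma>Y v)))
         \<ge> \<beta> / 10 * (\<Sum>v\<in>vbl c. log 2 (real (card (Q v))))) \<and>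
    \<comment> \<open>(vi)\<close>
    (\<forall>c\<in>C. vs \<in> vbl c \<longrightarrow>
       min (log 2 (real_of_int (flo QX \<Sigma>X vs)) +
              (\<Sum>v\<in>vbl c - {vs}. log 2 (real (card (QX v)) / real_of_int (cei QX \<Sigma>X v))))
           (log 2 (real_of_int (flo QY \<Sigma>Y vs)) +
              (\<Sum>v\<in>vbl c - {vs}. log 2 (real (card (QY v)) / real_of_int (cei QY \<Sigma>Y v))))
         \<ge> \<beta> / 10 * (\<Sum>v\<in>vbl c. log 2 (real (card (Q v)))))"

end

theory Submission
  imports Defs
begin

lemma card_mod_class:
  assumes "y < (s::nat)"
  shows "card {i. i < m \<and> i mod s = y} = (m + s - 1 - y) div s"
proof (induction m)
  case 0
  then show ?case using assms by simp
next
  case (Suc m)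
  have set: "{i. i < Suc m \<and> i mod s = y} = {i. i < m \<and> i mod s = y} \<union> (if m mod s = y then {m} else {})"
    by (cases "m mod s = y") (auto simp: less_Suc_eq)
  have ar: "(Suc m + s - 1 - y) div s = (m + s - 1 - y) div s + (if m mod s = y then 1 else 0)"
  proof -
    have e: "Suc m + s - 1 - y = Suc (m + s - 1 - y)" using assms by simp
    have iff: "Suc (m + s - 1 - y) mod s = 0 \<longleftrightarrow> m mod s = y"
    proof -
      have "Suc (m + s - 1 - y) = m + (s - y)" using assms by simp
      moreover have "(m + (s - y)) mod s = 0 \<longleftrightarrow> m mod s = y"
      proof -
        have "(m + (s - y)) mod s = (m mod s + (s - y)) mod s" by (simp add: mod_add_left_eq)
        moreover have "m mod s < s" using assms by simp
        moreover {
          assume "m mod s = y" then have "m mod s + (s - y) = s" using assms by simp }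
        moreover {
          assume "m mod s < y" then have "(m mod s + (s - y)) mod s = m mod s + (s - y)" "m mod s + (s - y) > 0"
            using assms by auto }
        moreover {
          assume a: "m mod s > y" "m mod s < s"
          then have "(m mod s + (s - y)) mod s = m mod s - y"
            using assms by (simp add: mod_if) }
        ultimately show ?thesis using assms
          by (cases "m mod s = y"; cases "m mod s < y") auto
      qed
      ultimately show ?thesis by simp
    qed
    show ?thesis unfolding e using iff by (simp add: div_Suc)
  qed
  show ?case unfolding set ar using Suc by (auto simp: card_insert_if)
qed

lemma balanced_map:
  assumes "finite A" "0 < (s::nat)"
  shows "\<exists>g. (\<forall>x\<in>A. g x \<in> {0..<s}) \<and> (\<forall>y\<in>{0..<s}.
     \<lfloor>real (card A) / real s\<rfloor> \<le> int (card {x\<in>A. g x = y}) \<and>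
     int (card {x\<in>A. g x = y}) \<le> \<lceil>real (card A) / real s\<rceil>)"
proof -
  obtain e where e: "bij_betw e A {0..<card A}" using ex_bij_betw_finite_nat[OF assms(1)] by blast
  define g where "g x = e x mod s" for x
  define m where "m = card A"
  have fib: "card {x\<in>A. g x = y} = card {i. i < m \<and> i mod s = y}" for y
  proof -
    have inj: "inj_on e {x\<in>A. g x = y}" using e unfolding bij_betw_def by (auto intro: inj_on_subset)
    have "e ` {x\<in>A. g x = y} = {i. i < m \<and> i mod s = y}"
    proof
      show "e ` {x\<in>A. g x = y} \<subseteq> {i. i < m \<and> i mod s = y}"
        using e unfolding bij_betw_def g_def m_def by auto
      show "{i. i < m \<and> i mod s = y} \<subseteq> e ` {x\<in>A. g x = y}"
      proof
        fix i assume i: "i \<in> {i. i < m \<and> i mod s = y}"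
        then have "i \<in> e ` A" using e unfolding bij_betw_def m_def by auto
        then obtain x where "x \<in> A" "i = e x" by auto
        then show "i \<in> e ` {x\<in>A. g x = y}" using i unfolding g_def by auto
      qed
    qed
    then show ?thesis using card_image[OF inj] by simp
  qed
  have bounds: "\<lfloor>real m / real s\<rfloor> \<le> int (card {x\<in>A. g x = y}) \<and>
     int (card {x\<in>A. g x = y}) \<le> \<lceil>real m / real s\<rceil>" if y: "y < s" for y
  proof -
    have c: "card {x\<in>A. g x = y} = (m + s - 1 - y) div s" using fib card_mod_class[OF y] by simp
    have "\<lfloor>real m / real s\<rfloor> = int (m div s)" by (rule floor_divide_of_nat_eq)
    moreover have "m div s \<le> (m + s - 1 - y) div s" using y by (intro div_le_mono) simp
    moreover have "int ((m + s - 1 - y) div s) \<le> \<lceil>real m / real s\<rceil>"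
    proof -
      have "s * ((m + s - 1 - y) div s) \<le> m + s - 1 - y" by simp
      then have "s * ((m + s - 1 - y) div s) \<le> m + s - 1" by linarith
      then have "real (s * ((m + s - 1 - y) div s)) \<le> real (m + s - 1)" by (simp only: of_nat_le_iff)
      moreover have "real (m + s - 1) = real m + real s - 1" using assms(2) by (simp add: of_nat_diff)
      ultimately have "real s * real ((m + s - 1 - y) div s) \<le> real m + real s - 1" by simp
      then have "real ((m + s - 1 - y) div s) - 1 < real m / real s"
        using assms(2) by (simp add: field_simps)
      then show ?thesis by (simp add: le_ceiling_iff)
    qed
    ultimately show ?thesis unfolding c by simp
  qed
  show ?thesis using bounds unfolding m_def g_def by (intro exI[of _ g]) (auto simp: g_def assms(2))
qed

lemma sqrt_ex: "\<exists>s::nat. s*s \<le> n \<and> n < (s+1)*(s+1)"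
proof (induction n)
  case 0 then show ?case by (intro exI[of _ 0]) simp
next
  case (Suc n)
  then obtain s where s: "s*s \<le> n" "n < (s+1)*(s+1)" by blast
  show ?case
  proof (cases "Suc n < (s+1)*(s+1)")
    case True then show ?thesis using s by (intro exI[of _ s]) simp
  next
    case False
    then have "Suc n = (s+1)*(s+1)" using s by linarith
    then show ?thesis by (intro exI[of _ "s+1"]) (simp add: algebra_simps)
  qed
qed

lemma poly_aux: assumes "(2::real) \<le> x" shows "(x+1)^2 \<le> (2*x/3)^8"
proof -
  have "(x+1)^2 \<le> (3/2*x)^2" using assms by (intro power_mono) auto
  also have "\<dots> = 9/4 * x^2" by (simp add: power2_eq_square)
  also have "\<dots> \<le> 16384/6561 * x^2" by simp
  also have "\<dots> = 256/6561 * 64 * x^2" by simp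
  also have "\<dots> \<le> 256/6561 * x^6 * x^2"
  proof -
    have "(2::real)^6 \<le> x^6" using assms by (intro power_mono) auto
    then show ?thesis by (intro mult_right_mono) auto
  qed
  also have "\<dots> = (2*x/3)^8" by (simp add: power_divide power_mult_distrib)
  finally show ?thesis .
qed

lemma big_bounds:
  assumes "2 \<le> s" "s*s \<le> \<mu>" "\<mu> < (s+1)*(s+1)" "\<mu> \<le> (m::nat)"
  shows "1 \<le> \<lfloor>real m / real s\<rfloor>"
    and "log 2 (real \<mu>) / 8 \<le> log 2 (real_of_int \<lfloor>real m / real s\<rfloor>)"
    and "log 2 (real \<mu>) / 8 \<le> log 2 (real m / real_of_int \<lceil>real m / real s\<rceil>)"
proof -
  define t where "t = 2 * real s / 3"
  have s2: "(2::real) \<le> real s" using assms(1) by simp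
  have tpos: "t > 0" using s2 unfolding t_def by simp
  have ms: "real s * real s \<le> real m" using assms(2,4) by (metis le_trans of_nat_le_iff of_nat_mult)
  have m_s: "real s \<le> real m / real s" using ms s2 by (simp add: field_simps)
  have fl: "real s \<le> real_of_int \<lfloor>real m / real s\<rfloor>"
  proof -
    have "int s \<le> \<lfloor>real m / real s\<rfloor>" using m_s by (simp add: le_floor_iff)
    then show ?thesis by linarith
  qed
  show "1 \<le> \<lfloor>real m / real s\<rfloor>" using fl s2 by linarith
  have mu_t: "real \<mu> \<le> t ^ 8"
  proof -
    have "real \<mu> \<le> (real s + 1)^2" using assms(3)
      by (metis less_imp_le_nat of_nat_1 of_nat_add of_nat_le_iff of_nat_mult power2_eq_square)
    also have "\<dots> \<le> t^8" unfolding t_def using poly_aux[OF s2] .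
    finally show ?thesis .
  qed
  have mupos: "real \<mu> > 0" using assms(1,2) by (metis mult_eq_0_iff not_numeral_le_zero of_nat_0_less_iff not_gr_zero le_0_eq)
  have key: "log 2 (real \<mu>) / 8 \<le> log 2 x" if "t \<le> x" for x
  proof -
    have "log 2 (real \<mu>) \<le> log 2 (t^8)" using mu_t mupos by (intro log_mono) auto
    also have "\<dots> = 8 * log 2 t" using tpos by (simp add: log_nat_power)
    also have "\<dots> \<le> 8 * log 2 x" using that tpos by (simp add: log_mono)
    finally show ?thesis by simp
  qed
  show "log 2 (real \<mu>) / 8 \<le> log 2 (real_of_int \<lfloor>real m / real s\<rfloor>)"
    using key fl unfolding t_def by simp
  have ce: "real_of_int \<lceil>real m / real s\<rceil> < real m / real s + 1" by linarith
  have m2s: "2 * real s \<le> real m"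
  proof -
    have "2 * real s \<le> real s * real s" using s2 by (intro mult_right_mono) auto
    then show ?thesis using ms by linarith
  qed
  have cepos: "real_of_int \<lceil>real m / real s\<rceil> > 0" using m_s s2 by (meson ceiling_correct less_le_trans order.strict_trans2 zero_less_numeral le_of_int_ceiling)
  have "t \<le> real m / real_of_int \<lceil>real m / real s\<rceil>"
  proof -
    have "real_of_int \<lceil>real m / real s\<rceil> \<le> 3 * real m / (2 * real s)"
      using ce m2s s2 by (simp add: field_simps)
    then have "t * real_of_int \<lceil>real m / real s\<rceil> \<le> real m"
      unfolding t_def using s2 by (simp add: field_simps)
    then show ?thesis using cepos by (simp add: field_simps)
  qed
  then show "log 2 (real \<mu>) / 8 \<le> log 2 (real m / real_of_int \<lceil>real m / real s\<rceil>)" by (rule key)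
qed

lemma log3_le: "log 2 (3::real) \<le> 8/5"
proof -
  have "(3::real) \<le> 2 powr (8/5)"
  proof -
    have h: "(3::real)^5 \<le> (2 powr (8/5))^5" by (simp add: powr_realpow[symmetric] powr_powr)
    show ?thesis
    proof (rule ccontr)
      assume "\<not> ?thesis"
      then have "(2 powr (8/5))^5 < (3::real)^5" by (intro power_strict_mono) auto
      then show False using h by simp
    qed
  qed
  then have "log 2 (3::real) \<le> log 2 (2 powr (8/5))" by (intro log_mono) auto
  then show ?thesis by simp
qed

lemma scheme_numeric:
  fixes QZ Q :: "'v \<Rightarrow> 'a set" and \<Sigma>Z \<Sigma> :: "'v \<Rightarrow> nat set"
    and W S T :: "'v set" and s \<mu> m :: "'v \<Rightarrow> nat" and va vs :: 'v and R :: real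
  assumes finW: "finite W"
    and fW: "\<forall>v\<in>W. flo Q \<Sigma> v \<ge> 1"
    and Svs: "vs \<notin> S" "va \<notin> S"
    and sS: "\<forall>v\<in>W \<inter> S. (m v = 2 \<or> m v = 3) \<and> s v = (if v \<in> T then 1 else m v)"
    and sN: "\<forall>v\<in>W - S. v \<noteq> vs \<longrightarrow> (if 4 \<le> \<mu> v then (2 \<le> s v \<and> s v * s v \<le> \<mu> v \<and> \<mu> v < (s v + 1) * (s v + 1)) else s v = 1)"
    and nS: "\<forall>v\<in>W - S. v \<noteq> vs \<longrightarrow> v \<noteq> va \<longrightarrow> \<mu> v \<noteq> 2 \<and> \<mu> v \<noteq> 3"
    and QZ: "\<forall>v\<in>W. v \<noteq> vs \<longrightarrow> card (\<Sigma>Z v) = s v \<and> \<mu> v \<le> card (QZ v) \<and> (v \<in> S \<longrightarrow> card (QZ v) = m v) \<and> flo Q \<Sigma> v \<le> int (\<mu> v)"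
    and Zvs: "vs \<in> W \<longrightarrow> QZ vs = Q vs \<and> \<Sigma>Z vs = \<Sigma> vs"
    and good: "real (card (T \<inter> (W \<inter> S))) \<ge> real (card (W \<inter> S)) / 3 - R"
              "real (card ((W \<inter> S) - T \<inter> (W \<inter> S))) \<ge> real (card (W \<inter> S)) / 3 - R"
  shows "(\<forall>v\<in>W. flo QZ \<Sigma>Z v \<ge> 1)"
    and "(\<Sum>v\<in>W. log 2 (real_of_int (flo QZ \<Sigma>Z v))) \<ge> (\<Sum>v\<in>W. log 2 (real_of_int (flo Q \<Sigma> v))) / 8 - R"
    and "(\<Sum>v\<in>W. (if v = vs then log 2 (real_of_int (flo QZ \<Sigma>Z v))
            else log 2 (real (card (QZ v)) / real_of_int (cei QZ \<Sigma>Z v))))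
         \<ge> (\<Sum>v\<in>W. log 2 (real_of_int (flo Q \<Sigma> v))) / 8 - R - 1/4"
proof -
  define w where "w v = log 2 (real_of_int (flo Q \<Sigma> v))" for v
  define AZ where "AZ v = log 2 (real_of_int (flo QZ \<Sigma>Z v))" for v
  define BZ where "BZ v = (if v = vs then log 2 (real_of_int (flo QZ \<Sigma>Z v))
            else log 2 (real (card (QZ v)) / real_of_int (cei QZ \<Sigma>Z v)))" for v
  define lowA where "lowA v = (if v \<in> S then (if v \<in> T then 1 else 0) else w v / 8)" for v
  define lowB where "lowB v = (if v \<in> S then (if v \<in> T then 0 else 1) else w v / 8 - (if v = va then 1/4 else 0))" for v
  have w0: "w v \<ge> 0" if "v \<in> W" for v
  proof -
    have "real_of_int (flo Q \<Sigma> v) \<ge> 1" using fW that by simp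
    then show ?thesis unfolding w_def by simp
  qed
  have wmu: "w v \<le> log 2 (real (\<mu> v))" if "v \<in> W" "v \<noteq> vs" for v
  proof -
    have "1 \<le> flo Q \<Sigma> v" "flo Q \<Sigma> v \<le> int (\<mu> v)" using fW QZ that by auto
    then show ?thesis unfolding w_def by (intro log_mono) auto
  qed
  have pv: "flo QZ \<Sigma>Z v \<ge> 1 \<and> AZ v \<ge> lowA v \<and> BZ v \<ge> lowB v" if v: "v \<in> W" for v
  proof (cases "v = vs")
    case True
    then have e: "flo QZ \<Sigma>Z v = flo Q \<Sigma> v" using Zvs v unfolding flo_def by simp
    have "v \<notin> S" using True Svs by simp
    then show ?thesis using e fW v w0[OF v] True unfolding AZ_def BZ_def lowA_def lowB_def w_def by auto
  next
    case nvs: False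
    have cs: "card (\<Sigma>Z v) = s v" and mu: "\<mu> v \<le> card (QZ v)" using QZ v nvs by auto
    have fl: "flo QZ \<Sigma>Z v = \<lfloor>real (card (QZ v)) / real (s v)\<rfloor>" unfolding flo_def cs ..
    have ce: "cei QZ \<Sigma>Z v = \<lceil>real (card (QZ v)) / real (s v)\<rceil>" unfolding cei_def cs ..
    show ?thesis
    proof (cases "v \<in> S")
      case inS: True
      have m: "card (QZ v) = m v" "m v = 2 \<or> m v = 3" using QZ sS v nvs inS by auto
      have m1: "real (m v) \<ge> 2" using m(2) by auto
      have lg: "log 2 (real (m v)) \<ge> 1" using m1 by simp
      show ?thesis
      proof (cases "v \<in> T")
        case True
        then have "s v = 1" using sS v inS by auto
        then have "flo QZ \<Sigma>Z v = int (m v)" "cei QZ \<Sigma>Z v = int (m v)" using fl ce m by auto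
        then show ?thesis using nvs inS True lg m1 m unfolding AZ_def BZ_def lowA_def lowB_def by auto
      next
        case False
        then have "s v = m v" using sS v inS by auto
        then have "flo QZ \<Sigma>Z v = 1" "cei QZ \<Sigma>Z v = 1" using fl ce m m1 by auto
        then show ?thesis using nvs inS False lg m1 m unfolding AZ_def BZ_def lowA_def lowB_def by auto
      qed
    next
      case nS': False
      show ?thesis
      proof (cases "4 \<le> \<mu> v")
        case big: True
        then have ss: "2 \<le> s v" "s v * s v \<le> \<mu> v" "\<mu> v < (s v + 1) * (s v + 1)" using sN v nS' nvs by auto
        note bb = big_bounds[OF ss mu]
        have "w v / 8 \<le> log 2 (real (\<mu> v)) / 8" using wmu[OF v nvs] by simp
        then show ?thesis using bb nvs nS' w0[OF v] unfolding AZ_def BZ_def lowA_def lowB_def fl ce by auto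
      next
        case small: False
        then have s1: "s v = 1" using sN v nS' nvs by auto
        have mupos: "1 \<le> \<mu> v" using fW QZ v nvs by force
        then have "flo QZ \<Sigma>Z v = int (card (QZ v))" "cei QZ \<Sigma>Z v = int (card (QZ v))"
          "card (QZ v) \<ge> 1" using fl ce s1 mu by auto
        then have A1: "flo QZ \<Sigma>Z v \<ge> 1" and A2: "AZ v \<ge> log 2 (real (\<mu> v))" and B0: "BZ v = 0"
          unfolding AZ_def BZ_def using mu mupos nvs by (auto intro: log_mono)
        have "w v / 8 - (if v = va then 1/4 else 0) \<le> 0"
        proof (cases "v = va")
          case True
          have "real (\<mu> v) \<le> 3" using small by simp
          then have "log 2 (real (\<mu> v)) \<le> log 2 3" using mupos by (intro log_mono) auto
          then have "w v \<le> log 2 3" using wmu[OF v nvs] by linarith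
          then show ?thesis using log3_le True by simp
        next
          case False
          then have "\<mu> v = 1" using nS v nS' nvs small mupos by force
          then show ?thesis using wmu[OF v nvs] False by simp
        qed
        moreover have "w v / 8 \<le> AZ v" using A2 wmu[OF v nvs] w0[OF v] by simp
        ultimately show ?thesis using A1 B0 nS' unfolding lowA_def lowB_def by auto
      qed
    qed
  qed
  show "\<forall>v\<in>W. flo QZ \<Sigma>Z v \<ge> 1" using pv by blast
  have wS: "(\<Sum>v\<in>W \<inter> S. w v / 8) \<le> real (card (W \<inter> S)) / 3"
  proof -
    have "(\<Sum>v\<in>W \<inter> S. w v / 8) \<le> (\<Sum>v\<in>W \<inter> S. 1/3)"
    proof (rule sum_mono)
      fix v assume v: "v \<in> W \<inter> S"
      then have "v \<noteq> vs" using Svs by auto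
      have "\<mu> v \<le> m v" using QZ v \<open>v \<noteq> vs\<close> by auto
      moreover have "m v = 2 \<or> m v = 3" using sS v by blast
      ultimately have "\<mu> v \<le> 3" by linarith
      have "1 \<le> flo Q \<Sigma> v" "flo Q \<Sigma> v \<le> int (\<mu> v)" using fW QZ v \<open>v \<noteq> vs\<close> by auto
      then have "w v \<le> log 2 3" unfolding w_def using \<open>\<mu> v \<le> 3\<close> by (intro log_mono) auto
      then show "w v / 8 \<le> 1/3" using log3_le by simp
    qed
    then show ?thesis by simp
  qed
  have split: "(\<Sum>v\<in>W. g v) = (\<Sum>v\<in>W \<inter> S. g v) + (\<Sum>v\<in>W - S. g v)" for g :: "'v \<Rightarrow> real"
    using finW by (metis Diff_disjoint Int_Diff_Un Int_commute finite_Int finite_Diff sum.union_disjoint inf_sup_aci(1) Int_Diff_disjoint)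
  have cT: "(\<Sum>v\<in>W \<inter> S. (if v \<in> T then 1 else 0)) = real (card (T \<inter> (W \<inter> S)))"
    using finW by (simp add: sum.If_cases Int_commute)
  have cNT: "(\<Sum>v\<in>W \<inter> S. (if v \<in> T then 0 else 1)) = real (card ((W \<inter> S) - T \<inter> (W \<inter> S)))"
  proof -
    have "(\<Sum>v\<in>W \<inter> S. (if v \<in> T then 0 else 1)) = real (card ((W \<inter> S) - T))"
      using finW by (simp add: sum.If_cases Diff_eq Int_commute)
    moreover have "(W \<inter> S) - T \<inter> (W \<inter> S) = (W \<inter> S) - T" by blast
    ultimately show ?thesis by simp
  qed
  have sumA: "(\<Sum>v\<in>W. lowA v) = real (card (T \<inter> (W \<inter> S))) + (\<Sum>v\<in>W - S. w v / 8)"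
    using split[of lowA] cT unfolding lowA_def by simp
  have sumB: "(\<Sum>v\<in>W. lowB v) \<ge> real (card ((W \<inter> S) - T \<inter> (W \<inter> S))) + (\<Sum>v\<in>W - S. w v / 8) - 1/4"
  proof -
    have "(\<Sum>v\<in>W - S. lowB v) = (\<Sum>v\<in>W - S. w v / 8) - (\<Sum>v\<in>W - S. (if v = va then 1/4 else 0))"
      unfolding lowB_def by (simp add: sum_subtractf)
    moreover have "(\<Sum>v\<in>W - S. (if v = va then 1/4 else 0::real)) \<le> 1/4"
      using finW by (simp add: sum.delta)
    moreover have "(\<Sum>v\<in>W \<inter> S. lowB v) = real (card ((W \<inter> S) - T \<inter> (W \<inter> S)))"
      using cNT unfolding lowB_def by simp
    ultimately show ?thesis using split[of lowB] by linarith
  qed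
  have Gs: "(\<Sum>v\<in>W. w v) / 8 = (\<Sum>v\<in>W \<inter> S. w v / 8) + (\<Sum>v\<in>W - S. w v / 8)"
    using split[of "\<lambda>v. w v / 8"] by (simp add: sum_divide_distrib)
  have "(\<Sum>v\<in>W. AZ v) \<ge> (\<Sum>v\<in>W. lowA v)" using pv by (intro sum_mono) auto
  then show "(\<Sum>v\<in>W. log 2 (real_of_int (flo QZ \<Sigma>Z v))) \<ge> (\<Sum>v\<in>W. log 2 (real_of_int (flo Q \<Sigma> v))) / 8 - R"
    using sumA Gs wS good(1) unfolding AZ_def w_def by linarith
  have "(\<Sum>v\<in>W. BZ v) \<ge> (\<Sum>v\<in>W. lowB v)" using pv by (intro sum_mono) auto
  then show "(\<Sum>v\<in>W. (if v = vs then log 2 (real_of_int (flo QZ \<Sigma>Z v))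
            else log 2 (real (card (QZ v)) / real_of_int (cei QZ \<Sigma>Z v))))
         \<ge> (\<Sum>v\<in>W. log 2 (real_of_int (flo Q \<Sigma> v))) / 8 - R - 1/4"
    using sumB Gs wS good(2) unfolding BZ_def w_def by linarith
qed

lemma sum_Pow_pow:
  assumes "finite A"
  shows "(\<Sum>X\<in>Pow A. (x::real) ^ card X) = (1 + x) ^ card A"
  using assms
proof (induction A rule: finite_induct)
  case empty then show ?case by simp
next
  case (insert a F)
  have disj: "Pow F \<inter> insert a ` Pow F = {}" using insert by auto
  have inj: "inj_on (insert a) (Pow F)" unfolding inj_on_def
  proof (intro ballI impI)
    fix X Y assume "X \<in> Pow F" "Y \<in> Pow F" "insert a X = insert a Y"
    then show "X = Y" using insert(2) insert_ident[of a X Y] by blast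
  qed
  have fin: "finite (Pow F)" using insert by simp
  have "(\<Sum>X\<in>Pow (insert a F). x ^ card X) = (\<Sum>X\<in>Pow F. x ^ card X) + (\<Sum>X\<in>insert a ` Pow F. x ^ card X)"
    unfolding Pow_insert using disj fin by (intro sum.union_disjoint) auto
  also have "(\<Sum>X\<in>insert a ` Pow F. x ^ card X) = (\<Sum>X\<in>Pow F. x ^ card (insert a X))"
    using sum.reindex[OF inj] by simp
  also have "\<dots> = (\<Sum>X\<in>Pow F. x * x ^ card X)"
  proof (rule sum.cong)
    fix X assume "X \<in> Pow F"
    then have "finite X" "a \<notin> X" using insert finite_subset by auto
    then show "x ^ card (insert a X) = x * x ^ card X" by simp
  qed simp
  also have "\<dots> = x * (1 + x) ^ card F" using insert by (simp only: sum_distrib_left[symmetric])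
  finally show ?case using insert by (simp add: algebra_simps)
qed

lemma cube_root_bound: "2 powr (1/3) \<le> (4/3::real)"
proof (rule ccontr)
  assume "\<not> ?thesis"
  then have h: "4/3 < 2 powr (1/3::real)" by simp
  have "(4/3::real)^3 < (2 powr (1/3))^3" using h by (intro power_strict_mono) auto
  also have "(2 powr (1/3::real))^3 = 2 powr (1/3 * 3)"
    by (subst powr_realpow[symmetric]) (auto simp: powr_powr)
  finally have "(4/3::real)^3 < 2" by simp
  moreover have "(4/3::real)^3 = 64/27" by (simp add: power_divide)
  ultimately show False by simp
qed

lemma chernoff_count:
  assumes "finite A"
  shows "real (card {X \<in> Pow A. real (card X) < real (card A) / 3 - R}) \<le> 2 powr (-R) * 2 ^ card A"
proof -
  define n where "n = card A"
  define t where "t = real n / 3 - R"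
  define B where "B = {X \<in> Pow A. real (card X) < t}"
  have finB: "finite B" using assms unfolding B_def by simp
  have "real (card B) * 2 powr (-t) = (\<Sum>X\<in>B. 2 powr (-t))" by simp
  also have "\<dots> \<le> (\<Sum>X\<in>B. (1/2) ^ card X)"
  proof (rule sum_mono)
    fix X assume "X \<in> B"
    then have "real (card X) < t" unfolding B_def by simp
    then have "2 powr (-t) \<le> 2 powr (- real (card X))" by (intro powr_mono) auto
    also have "\<dots> = (1/2) ^ card X" by (simp add: powr_minus powr_realpow power_one_over inverse_eq_divide)
    finally show "2 powr (-t) \<le> (1/2) ^ card X" .
  qed
  also have "\<dots> \<le> (\<Sum>X\<in>Pow A. (1/2::real) ^ card X)"
    using assms unfolding B_def by (intro sum_mono2) auto
  also have "\<dots> = (3/2) ^ n" unfolding n_def using sum_Pow_pow[OF assms, of "1/2"] by simp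
  finally have c: "real (card B) * 2 powr (-t) \<le> (3/2) ^ n" .
  have "real (card B) \<le> (3/2) ^ n * 2 powr t"
    using c by (simp add: powr_minus field_simps)
  also have "2 powr t = 2 powr (-R) * 2 powr (real n / 3)" unfolding t_def by (simp add: powr_add[symmetric])
  also have "2 powr (real n / 3) = (2 powr (1/3)) ^ n"
    by (subst powr_realpow[symmetric]) (auto simp: powr_powr)
  finally have cb: "real (card B) \<le> 2 powr (-R) * ((3/2) ^ n * (2 powr (1/3)) ^ n)"
    by (simp add: algebra_simps)
  have "(3/2::real) ^ n * (2 powr (1/3)) ^ n = ((3/2) * 2 powr (1/3)) ^ n" by (simp only: power_mult_distrib)
  also have "\<dots> \<le> (2::real) ^ n"
  proof (rule power_mono)
    show "(3/2) * 2 powr (1/3) \<le> (2::real)" using cube_root_bound by simp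
  qed simp
  finally have "2 powr (-R) * ((3/2::real) ^ n * (2 powr (1/3)) ^ n) \<le> 2 powr (-R) * 2 ^ n"
    by (intro mult_left_mono) auto
  with cb have "real (card B) \<le> 2 powr (-R) * 2 ^ n" by linarith
  then show ?thesis unfolding B_def t_def n_def .
qed

lemma chernoff_two:
  assumes "finite A"
  shows "real (card {X \<in> Pow A. real (card X) < real (card A) / 3 - R \<or> real (card (A - X)) < real (card A) / 3 - R})
     \<le> 2 powr (1 - R) * 2 ^ card A"
proof -
  define t where "t = real (card A) / 3 - R"
  define B1 where "B1 = {X \<in> Pow A. real (card X) < t}"
  define B2 where "B2 = {X \<in> Pow A. real (card (A - X)) < t}"
  have "B2 = (\<lambda>X. A - X) ` B1"
  proof
    show "B2 \<subseteq> (\<lambda>X. A - X) ` B1"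
    proof
      fix X assume X: "X \<in> B2"
      then have "A - X \<in> B1" "X = A - (A - X)" unfolding B1_def B2_def by auto
      then show "X \<in> (\<lambda>X. A - X) ` B1" by blast
    qed
    show "(\<lambda>X. A - X) ` B1 \<subseteq> B2"
    proof
      fix Y assume "Y \<in> (\<lambda>X. A - X) ` B1"
      then obtain X where X: "X \<in> B1" "Y = A - X" by auto
      then have "A - Y = X" unfolding B1_def by auto
      then show "Y \<in> B2" using X unfolding B1_def B2_def by auto
    qed
  qed
  moreover have "inj_on (\<lambda>X. A - X) B1" unfolding inj_on_def B1_def by auto
  ultimately have c2: "card B2 = card B1" by (simp add: card_image)
  have "{X \<in> Pow A. real (card X) < t \<or> real (card (A - X)) < t} = B1 \<union> B2"
    unfolding B1_def B2_def by auto
  then have "card {X \<in> Pow A. real (card X) < t \<or> real (card (A - X)) < t} \<le> card B1 + card B2"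
    by (simp add: card_Un_le)
  then have "real (card {X \<in> Pow A. real (card X) < t \<or> real (card (A - X)) < t}) \<le> 2 * real (card B1)"
    using c2 by linarith
  also have "\<dots> \<le> 2 * (2 powr (-R) * 2 ^ card A)"
    using chernoff_count[OF assms, of R] unfolding B1_def t_def by simp
  also have "\<dots> = 2 powr (1 - R) * 2 ^ card A" by (simp add: powr_diff powr_minus_divide)
  finally show ?thesis unfolding t_def .
qed

lemma card_split:
  assumes "finite S" "B \<subseteq> S"
  shows "card {T \<in> Pow S. f (T \<inter> B) \<and> g (T - B)} = card {X \<in> Pow B. f X} * card {Y \<in> Pow (S - B). g Y}"
proof -
  have "bij_betw (\<lambda>T. (T \<inter> B, T - B)) {T \<in> Pow S. f (T \<inter> B) \<and> g (T - B)}
          ({X \<in> Pow B. f X} \<times> {Y \<in> Pow (S - B). g Y})"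
    unfolding bij_betw_def
  proof
    show "inj_on (\<lambda>T. (T \<inter> B, T - B)) {T \<in> Pow S. f (T \<inter> B) \<and> g (T - B)}"
      unfolding inj_on_def by blast
    show "(\<lambda>T. (T \<inter> B, T - B)) ` {T \<in> Pow S. f (T \<inter> B) \<and> g (T - B)} = {X \<in> Pow B. f X} \<times> {Y \<in> Pow (S - B). g Y}"
    proof
      show "(\<lambda>T. (T \<inter> B, T - B)) ` {T \<in> Pow S. f (T \<inter> B) \<and> g (T - B)} \<subseteq> {X \<in> Pow B. f X} \<times> {Y \<in> Pow (S - B). g Y}"
        by auto
      show "{X \<in> Pow B. f X} \<times> {Y \<in> Pow (S - B). g Y} \<subseteq> (\<lambda>T. (T \<inter> B, T - B)) ` {T \<in> Pow S. f (T \<inter> B) \<and> g (T - B)}"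
      proof
        fix p assume p: "p \<in> {X \<in> Pow B. f X} \<times> {Y \<in> Pow (S - B). g Y}"
        obtain X Y where XY: "p = (X, Y)" by (cases p)
        have e1: "(X \<union> Y) \<inter> B = X" "(X \<union> Y) - B = Y" using p XY by auto
        have "X \<union> Y \<in> {T \<in> Pow S. f (T \<inter> B) \<and> g (T - B)}" using p XY assms(2) e1 by auto
        then show "p \<in> (\<lambda>T. (T \<inter> B, T - B)) ` {T \<in> Pow S. f (T \<inter> B) \<and> g (T - B)}"
          using XY e1 by (metis (no_types, lifting) image_eqI)
      qed
    qed
  qed
  then show ?thesis by (simp add: bij_betw_same_card card_cartesian_product)
qed

lemma lll:
  fixes S :: "'v set" and I :: "'i set" and A :: "'i \<Rightarrow> 'v set" and P :: "'i \<Rightarrow> 'v set \<Rightarrow> bool"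
  assumes finS: "finite S" and finI: "finite I" and sub: "\<forall>i\<in>I. A i \<subseteq> S"
    and prob: "\<forall>i\<in>I. real (card {X \<in> Pow (A i). P i X}) \<le> p * 2 ^ card (A i)"
    and deg: "\<forall>i\<in>I. card {j\<in>I. j \<noteq> i \<and> A i \<inter> A j \<noteq> {}} \<le> d"
    and pd: "4 * p * d \<le> 1" and p2: "p < 1/2" and p0: "0 \<le> p"
  shows "\<exists>T\<subseteq>S. \<forall>i\<in>I. \<not> P i (T \<inter> A i)"
proof -
  define Ev where "Ev i = {T \<in> Pow S. P i (T \<inter> A i)}" for i
  define N where "N F = {T \<in> Pow S. \<forall>j\<in>F. \<not> P j (T \<inter> A j)}" for F
  have finN: "finite (N F)" for F using finS unfolding N_def by simp
  have indep: "real (card (Ev i \<inter> N F)) \<le> p * real (card (N F))"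
    if i: "i \<in> I" and F: "\<forall>j\<in>F. A j \<inter> A i = {}" for i F
  proof -
    define B where "B = A i"
    have BS: "B \<subseteq> S" using sub i unfolding B_def by auto
    define g where "g Y = (\<forall>j\<in>F. \<not> P j (Y \<inter> A j))" for Y
    have key: "g (T - B) \<longleftrightarrow> (\<forall>j\<in>F. \<not> P j (T \<inter> A j))" for T
      unfolding g_def
    proof (rule ball_cong[OF refl])
      fix j assume "j \<in> F"
      then have "(T - B) \<inter> A j = T \<inter> A j" using F unfolding B_def by blast
      then show "(\<not> P j ((T - B) \<inter> A j)) = (\<not> P j (T \<inter> A j))" by simp
    qed
    have "Ev i \<inter> N F = {T \<in> Pow S. P i (T \<inter> B) \<and> g (T - B)}"
      unfolding Ev_def N_def B_def by (auto simp only: key[unfolded B_def]) 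
    then have c1: "card (Ev i \<inter> N F) = card {X \<in> Pow B. P i X} * card {Y \<in> Pow (S - B). g Y}"
      using card_split[OF finS BS] by simp
    have "N F = {T \<in> Pow S. (\<lambda>_. True) (T \<inter> B) \<and> g (T - B)}"
      unfolding N_def by (auto simp only: key)
    then have c2: "card (N F) = card {X \<in> Pow B. True} * card {Y \<in> Pow (S - B). g Y}"
      using card_split[OF finS BS, of "\<lambda>_. True"] by simp
    have c3: "card {X \<in> Pow B. True} = 2 ^ card B"
    proof -
      have "{X \<in> Pow B. True} = Pow B" by blast
      moreover have "finite B" using BS finS finite_subset by auto
      ultimately show ?thesis by (simp only: card_Pow)
    qed
    have "real (card {X \<in> Pow B. P i X}) \<le> p * 2 ^ card B" using prob i unfolding B_def by auto
    then have "real (card {X \<in> Pow B. P i X}) * real (card {Y \<in> Pow (S - B). g Y})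
       \<le> p * 2 ^ card B * real (card {Y \<in> Pow (S - B). g Y})" by (intro mult_right_mono) auto
    then show ?thesis unfolding c1 c2 c3 by simp
  qed
  have main: "\<And>F. F \<subseteq> I \<Longrightarrow> card F = n \<Longrightarrow>
     card (N F) > 0 \<and> (\<forall>i\<in>I - F. real (card (Ev i \<inter> N F)) \<le> 2 * p * real (card (N F)))" for n
  proof (induction n rule: less_induct)
    case (less n)
    fix F assume F: "F \<subseteq> I" "card F = n"
    have finF: "finite F" using F finI finite_subset by auto
    have P2: "\<forall>i\<in>I - F. real (card (Ev i \<inter> N F)) \<le> 2 * p * real (card (N F))"
    proof
      fix i assume i: "i \<in> I - F"
      define F1 where "F1 = {j\<in>F. A j \<inter> A i \<noteq> {}}"
      define F2 where "F2 = F - F1"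
      show "real (card (Ev i \<inter> N F)) \<le> 2 * p * real (card (N F))"
      proof (cases "F1 = {}")
        case True
        then have "\<forall>j\<in>F. A j \<inter> A i = {}" by (auto simp: F1_def)
        then have "real (card (Ev i \<inter> N F)) \<le> p * real (card (N F))" using indep i by auto
        moreover have "p * real (card (N F)) \<le> 2 * p * real (card (N F))" using p0 by simp
        ultimately show ?thesis by linarith
      next
        case False
        have F2I: "F2 \<subseteq> I" using F unfolding F2_def by auto
        have "F2 \<subset> F" using False unfolding F2_def F1_def by auto
        then have lt: "card F2 < n" using F finF psubset_card_mono by blast
        have IH: "\<forall>j\<in>I - F2. real (card (Ev j \<inter> N F2)) \<le> 2 * p * real (card (N F2))"
          using less.IH[OF lt F2I refl] by blast
        have F1sub: "F1 \<subseteq> I - F2" using F unfolding F1_def F2_def by auto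
        have finF1: "finite F1" using finF unfolding F1_def by simp
        have NF: "N F = N F2 - (\<Union>j\<in>F1. Ev j)"
          unfolding N_def Ev_def F2_def F1_def by auto
        have cF1: "card F1 \<le> d"
        proof -
          have "F1 \<subseteq> {j\<in>I. j \<noteq> i \<and> A i \<inter> A j \<noteq> {}}" using F i unfolding F1_def by auto
          then have "card F1 \<le> card {j\<in>I. j \<noteq> i \<and> A i \<inter> A j \<noteq> {}}" using finI by (intro card_mono) auto
          then show ?thesis using deg i by force
        qed
        have U: "real (card (N F2 \<inter> (\<Union>j\<in>F1. Ev j))) \<le> real (card F1) * (2 * p * real (card (N F2)))"
        proof -
          have "N F2 \<inter> (\<Union>j\<in>F1. Ev j) = (\<Union>j\<in>F1. Ev j \<inter> N F2)" by auto
          then have "card (N F2 \<inter> (\<Union>j\<in>F1. Ev j)) \<le> (\<Sum>j\<in>F1. card (Ev j \<inter> N F2))"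
            using card_UN_le[OF finF1, of "\<lambda>j. Ev j \<inter> N F2"] by argo
          then have "real (card (N F2 \<inter> (\<Union>j\<in>F1. Ev j))) \<le> (\<Sum>j\<in>F1. real (card (Ev j \<inter> N F2)))"
            by (metis of_nat_le_iff of_nat_sum)
          also have "\<dots> \<le> (\<Sum>j\<in>F1. 2 * p * real (card (N F2)))"
            using IH F1sub by (intro sum_mono) auto
          finally show ?thesis by simp
        qed
        have "real (card F1) * (2 * p * real (card (N F2))) \<le> real d * (2 * p * real (card (N F2)))"
          using cF1 p0 by (intro mult_right_mono) auto
        also have "\<dots> \<le> 1/2 * real (card (N F2))"
        proof -
          have "real d * (2 * p) \<le> 1/2" using pd by (simp add: algebra_simps)
          then show ?thesis by (metis mult.assoc mult_right_mono of_nat_0_le_iff)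
        qed
        finally have U2: "real (card (N F2 \<inter> (\<Union>j\<in>F1. Ev j))) \<le> 1/2 * real (card (N F2))"
          using U by linarith
        have "card (N F) = card (N F2) - card (N F2 \<inter> (\<Union>j\<in>F1. Ev j))"
          unfolding NF by (rule card_Diff_subset_Int) (simp add: finN)
        moreover have "card (N F2 \<inter> (\<Union>j\<in>F1. Ev j)) \<le> card (N F2)" using finN by (intro card_mono) auto
        ultimately have half: "1/2 * real (card (N F2)) \<le> real (card (N F))" using U2 by (simp add: of_nat_diff)
        have "N F \<subseteq> N F2" unfolding NF by auto
        then have "card (Ev i \<inter> N F) \<le> card (Ev i \<inter> N F2)" using finN by (intro card_mono) auto
        also have "real (card (Ev i \<inter> N F2)) \<le> p * real (card (N F2))"
          using i by (intro indep) (auto simp: F2_def F1_def)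
        finally have "real (card (Ev i \<inter> N F)) \<le> p * real (card (N F2))" by simp
        also have "\<dots> \<le> p * (2 * real (card (N F)))" using half p0 by (intro mult_left_mono) auto
        finally show ?thesis by simp
      qed
    qed
    have P1: "card (N F) > 0"
    proof (cases "F = {}")
      case True
      then have "N F = Pow S" unfolding N_def by auto
      then show ?thesis using finS by (simp add: card_Pow)
    next
      case False
      then obtain j where j: "j \<in> F" by auto
      define F' where "F' = F - {j}"
      have lt: "card F' < n" using j F finF unfolding F'_def by (metis card_Diff1_less)
      have F'I: "F' \<subseteq> I" using F unfolding F'_def by auto
      have IH: "card (N F') > 0" "real (card (Ev j \<inter> N F')) \<le> 2 * p * real (card (N F'))"
        using less.IH[OF lt F'I refl] j F unfolding F'_def by auto
      have NF: "N F = N F' - Ev j" using j unfolding N_def Ev_def F'_def by auto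
      have "card (N F) = card (N F') - card (N F' \<inter> Ev j)"
        unfolding NF by (rule card_Diff_subset_Int) (simp add: finN)
      moreover have "card (N F' \<inter> Ev j) \<le> card (N F')" using finN by (intro card_mono) auto
      moreover have "real (card (N F' \<inter> Ev j)) < real (card (N F'))"
      proof -
        have "2 * p * real (card (N F')) < real (card (N F'))" using IH(1) p2 by simp
        then show ?thesis using IH(2) by (simp add: Int_commute)
      qed
      ultimately show ?thesis by linarith
    qed
    show "card (N F) > 0 \<and> (\<forall>i\<in>I - F. real (card (Ev i \<inter> N F)) \<le> 2 * p * real (card (N F)))"
      using P1 P2 by blast
  qed
  have "card (N I) > 0" using main[of I "card I"] by blast
  then obtain T where "T \<in> N I" by (metis card.empty ex_in_conv less_irrefl)
  then show ?thesis unfolding N_def by auto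
qed

lemma log_prod_pos:
  assumes "finite W" "\<forall>v\<in>W. (x v::real) > 0"
  shows "log 2 (\<Prod>v\<in>W. x v) = (\<Sum>v\<in>W. log 2 (x v))"
  using assms
proof (induction W rule: finite_induct)
  case empty then show ?case by simp
next
  case (insert a F)
  have "(\<Prod>v\<in>F. x v) > 0" using insert by (intro prod_pos) auto
  moreover have "x a > 0" using insert by simp
  ultimately have "log 2 (x a * (\<Prod>v\<in>F. x v)) = log 2 (x a) + log 2 (\<Prod>v\<in>F. x v)"
    by (intro log_mult_pos) auto
  then show ?case using insert by simp
qed

lemma L_bound:
  assumes "finite C" "c \<in> C" "\<forall>c\<in>C. finite (vbl c)" "\<forall>c\<in>C. \<forall>v\<in>vbl c. card (Q v) \<ge> 2"
  shows "log 2 (1 / viol_prob Q C vbl) \<le> (\<Sum>v\<in>vbl c. log 2 (real (card (Q v))))"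
proof -
  define pr where "pr c = (\<Prod>v\<in>vbl c. 1 / real (card (Q v)))" for c
  have prpos: "pr c > 0" if "c \<in> C" for c
    unfolding pr_def using assms(4) that by (intro prod_pos) force
  have "pr c \<le> viol_prob Q C vbl" unfolding viol_prob_def pr_def[symmetric] using assms(1,2) by (intro Max_ge) auto
  then have "1 / viol_prob Q C vbl \<le> 1 / pr c" using prpos[OF assms(2)] by (intro divide_left_mono) auto
  moreover have "1 / viol_prob Q C vbl > 0" using prpos[OF assms(2)] \<open>pr c \<le> _\<close> by simp
  ultimately have "log 2 (1 / viol_prob Q C vbl) \<le> log 2 (1 / pr c)" by (intro log_mono) auto
  also have "1 / pr c = (\<Prod>v\<in>vbl c. real (card (Q v)))" unfolding pr_def by (simp add: prod_dividef)
  also have "log 2 \<dots> = (\<Sum>v\<in>vbl c. log 2 (real (card (Q v))))"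
    using assms by (intro log_prod_pos) force+
  finally show ?thesis .
qed

lemma final_arith:
  fixes \<beta> R G L lp x :: real
  assumes "\<beta> > 0" "R \<ge> 3" "G \<ge> \<beta> * L" "L \<ge> lp" "lp \<ge> 55 / \<beta> * R" "x \<ge> G / 8 - R - 1/4"
  shows "x \<ge> \<beta> / 10 * L"
proof -
  have "\<beta> * lp \<ge> \<beta> * (55 / \<beta> * R)" using assms by (intro mult_left_mono) auto
  then have a: "\<beta> * lp \<ge> 55 * R" using assms(1) by simp
  have "\<beta> * L \<ge> \<beta> * lp" using assms by (intro mult_left_mono) auto
  moreover have "\<beta> / 10 * L = (\<beta> * L) / 10" by simp
  ultimately show ?thesis using a assms(2,3,6) by linarith
qed

theorem lemma8p11:
  fixes V :: "'v set" and Q :: "'v \<Rightarrow> 'a set" and C :: "'c set"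
    and vbl :: "'c \<Rightarrow> 'v set" and sat :: "'c \<Rightarrow> ('v \<Rightarrow> 'a) \<Rightarrow> bool"
    and \<Sigma> :: "'v \<Rightarrow> nat set" and h :: "'v \<Rightarrow> 'a \<Rightarrow> nat"
    and \<alpha> \<beta> :: real and X Y :: "'v \<Rightarrow> nat" and v0 vs :: 'v
  assumes "csp_formula V Q C vbl sat"
    and "atomic_constraints Q C vbl sat"
    and "C \<noteq> {}"
    and "proj_scheme V Q \<Sigma> h"
    and "entropy_criterion V Q C vbl \<Sigma> h \<alpha> \<beta>"
    and "0 < \<beta>" and "\<beta> < \<alpha>" and "\<alpha> < 1"
    and "\<forall>v\<in>V. X v \<in> \<Sigma> v" and "\<forall>v\<in>V. Y v \<in> \<Sigma> v"
    and "v0 \<in> V" and "X v0 \<noteq> Y v0" and "\<forall>v\<in>V. v \<noteq> v0 \<longrightarrow> X v = Y v"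
    and "vs \<in> V" and "vs \<noteq> v0"
    and "log 2 (1 / viol_prob Q C vbl) \<ge> 55 / \<beta> * (log 2 (real (max_degree C vbl)) + 3)"
  shows "\<exists>\<Sigma>X hX \<Sigma>Y hY.
           proj_scheme V (restr_dom Q h X vs) \<Sigma>X hX \<and>
           proj_scheme V (restr_dom Q h Y vs) \<Sigma>Y hY \<and>
           coupling_condition V Q C vbl \<Sigma> h \<beta> v0 vs
             (restr_dom Q h X vs) (restr_dom Q h Y vs) \<Sigma>X hX \<Sigma>Y hY"

proof -
  note csp = assms(1)[unfolded csp_formula_def]
  have finV: "finite V" and finQ: "\<forall>v\<in>V. finite (Q v) \<and> card (Q v) \<ge> 2"
    and finC: "finite C" and vblV: "\<forall>c\<in>C. vbl c \<subseteq> V" using csp by auto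
  note ent = assms(5)[unfolded entropy_criterion_def]
  have bal: "balanced V Q \<Sigma> h" using ent by blast
  have entc: "\<forall>c\<in>C. (\<forall>v\<in>vbl c. flo Q \<Sigma> v \<ge> 1) \<and>
      (\<Sum>v\<in>vbl c. log 2 (real_of_int (flo Q \<Sigma> v))) \<ge> \<beta> * (\<Sum>v\<in>vbl c. log 2 (real (card (Q v))))"
    using ent by blast
  have finS: "\<forall>v\<in>V. finite (\<Sigma> v) \<and> (\<forall>x\<in>Q v. h v x \<in> \<Sigma> v)" using assms(4) unfolding proj_scheme_def by blast
  define QX where "QX = restr_dom Q h X vs"
  define QY where "QY = restr_dom Q h Y vs"
  have QXY: "QX u = QY u" if "u \<in> V" "u \<noteq> v0" for u
    using that assms(13) unfolding QX_def QY_def restr_dom_def by auto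
  have QXvs: "QX vs = Q vs" "QY vs = Q vs" unfolding QX_def QY_def restr_dom_def by auto
  have QXne: "QX u = {x\<in>Q u. h u x = X u}" "QY u = {x\<in>Q u. h u x = Y u}" if "u \<noteq> vs" for u
    using that unfolding QX_def QY_def restr_dom_def by auto
  have finQX: "finite (QX u)" "finite (QY u)" if "u \<in> V" for u
    using finQ that unfolding QX_def QY_def restr_dom_def by auto
  define mX where "mX u = card (QX u)" for u
  define mY where "mY u = card (QY u)" for u
  define \<mu> where "\<mu> u = min (mX u) (mY u)" for u
  have mXY: "mX u = mY u" if "u \<in> V" "u \<noteq> v0" for u using QXY[OF that] unfolding mX_def mY_def by simp
  have fle: "flo Q \<Sigma> u \<le> int (mX u) \<and> flo Q \<Sigma> u \<le> int (mY u)" if "u \<in> V" "u \<noteq> vs" for u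
  proof -
    have "X u \<in> \<Sigma> u" "Y u \<in> \<Sigma> u" using assms(9,10) that by auto
    then show ?thesis using bal that QXne[OF that(2)] unfolding balanced_def mX_def mY_def by auto
  qed
  define D where "D = max_degree C vbl"
  define R where "R = 3 + log 2 (real D)"
  have logD: "log 2 (real D) \<ge> 0"
  proof (cases "D = 0")
    case True then show ?thesis by (simp add: log_def)
  next
    case False then show ?thesis by simp
  qed
  have R3: "R \<ge> 3" using logD unfolding R_def by simp
  define S where "S = {u\<in>V. u \<noteq> vs \<and> u \<noteq> v0 \<and> (mX u = 2 \<or> mX u = 3)}"
  define Ac where "Ac c = vbl c \<inter> S" for c
  define Pc where "Pc c Z = (real (card Z) < real (card (Ac c)) / 3 - R \<or> real (card (Ac c - Z)) < real (card (Ac c)) / 3 - R)" for c Z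
  have finSS: "finite S" using finV unfolding S_def by simp
  have degC: "card {j\<in>C. j \<noteq> c \<and> Ac c \<inter> Ac j \<noteq> {}} \<le> D" if c: "c \<in> C" for c
  proof -
    have "{j\<in>C. j \<noteq> c \<and> Ac c \<inter> Ac j \<noteq> {}} \<subseteq> {c'\<in>C. c' \<noteq> c \<and> vbl c \<inter> vbl c' \<noteq> {}}"
      unfolding Ac_def by auto
    then have "card {j\<in>C. j \<noteq> c \<and> Ac c \<inter> Ac j \<noteq> {}} \<le> dep_degree C vbl c"
      unfolding dep_degree_def using finC by (intro card_mono) auto
    also have "\<dots> \<le> D" unfolding D_def max_degree_def using finC c by (intro Max_ge) auto
    finally show ?thesis .
  qed
  have pD: "4 * 2 powr (1 - R) * real D \<le> 1"
  proof (cases "D = 0")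
    case True then show ?thesis by simp
  next
    case False
    have "2 powr (1 - R) = 2 powr (-2) * 2 powr (- log 2 (real D))"
      unfolding R_def by (simp add: powr_add[symmetric])
    also have "2 powr (- log 2 (real D)) = 1 / real D" using False by (simp add: powr_minus_divide)
    finally show ?thesis using False by (simp add: powr_minus_divide)
  qed
  have p2: "2 powr (1 - R) < 1/2"
  proof -
    have "2 powr (1 - R) \<le> 2 powr (-2)" using R3 by (intro powr_mono) auto
    also have "\<dots> < 1/2" by (simp add: powr_minus_divide)
    finally show ?thesis .
  qed
  obtain T where TS: "T \<subseteq> S" and Tgood: "\<forall>c\<in>C. \<not> Pc c (T \<inter> Ac c)"
  proof -
    have "\<exists>T\<subseteq>S. \<forall>c\<in>C. \<not> Pc c (T \<inter> Ac c)"
    proof (rule lll[where p = "2 powr (1 - R)" and d = D])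
      show "finite S" by (rule finSS)
      show "finite C" by (rule finC)
      show "\<forall>i\<in>C. Ac i \<subseteq> S" unfolding Ac_def by auto
      show "\<forall>i\<in>C. real (card {Z \<in> Pow (Ac i). Pc i Z}) \<le> 2 powr (1 - R) * 2 ^ card (Ac i)"
      proof
        fix i assume "i \<in> C"
        have "finite (Ac i)" using finSS unfolding Ac_def by simp
        then show "real (card {Z \<in> Pow (Ac i). Pc i Z}) \<le> 2 powr (1 - R) * 2 ^ card (Ac i)"
          unfolding Pc_def by (rule chernoff_two)
      qed
      show "\<forall>i\<in>C. card {j\<in>C. j \<noteq> i \<and> Ac i \<inter> Ac j \<noteq> {}} \<le> D" using degC by blast
      show "4 * 2 powr (1 - R) * real D \<le> 1" by (rule pD)
      show "2 powr (1 - R) < 1/2" by (rule p2)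
      show "0 \<le> 2 powr (1 - R)" by simp
    qed
    then show ?thesis using that by blast
  qed
  define sq where "sq u = (SOME s. 2 \<le> s \<and> s*s \<le> \<mu> u \<and> \<mu> u < (s+1)*(s+1))" for u
  have sq: "2 \<le> sq u \<and> sq u * sq u \<le> \<mu> u \<and> \<mu> u < (sq u + 1) * (sq u + 1)" if "4 \<le> \<mu> u" for u
  proof -
    obtain s where s: "s*s \<le> \<mu> u" "\<mu> u < (s+1)*(s+1)" using sqrt_ex by blast
    have "2 \<le> s"
    proof (rule ccontr)
      assume "\<not> 2 \<le> s"
      then have "s \<le> 1" by simp
      then have "(s+1)*(s+1) \<le> 2*2" by (intro mult_mono) auto
      then show False using s that by simp
    qed
    then have "\<exists>s. 2 \<le> s \<and> s*s \<le> \<mu> u \<and> \<mu> u < (s+1)*(s+1)" using s by blast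
    then show ?thesis unfolding sq_def by (rule someI_ex)
  qed
  define sv where "sv u = (if u \<in> S then (if u \<in> T then 1 else mX u) else if 4 \<le> \<mu> u then sq u else 1)" for u
  have svpos: "0 < sv u" for u
    using sq[of u] unfolding sv_def S_def by auto
  define bprop where "bprop A s g = ((\<forall>x\<in>A. g x \<in> {0..<s}) \<and> (\<forall>y\<in>{0..<s}.
     \<lfloor>real (card A) / real s\<rfloor> \<le> int (card {x\<in>A. g x = y}) \<and>
     int (card {x\<in>A. g x = y}) \<le> \<lceil>real (card A) / real s\<rceil>))" for A s and g :: "'a \<Rightarrow> nat"
  define gX where "gX u = (SOME g. bprop (QX u) (sv u) g)" for u
  define gY where "gY u = (SOME g. bprop (QY u) (sv u) g)" for u
  have gX: "bprop (QX u) (sv u) (gX u)" and gY: "bprop (QY u) (sv u) (gY u)" if "u \<in> V" for u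
  proof -
    have "\<exists>g. bprop (QX u) (sv u) g" unfolding bprop_def by (rule balanced_map[OF finQX(1)[OF that] svpos])
    then show "bprop (QX u) (sv u) (gX u)" unfolding gX_def by (rule someI_ex)
    have "\<exists>g. bprop (QY u) (sv u) g" unfolding bprop_def by (rule balanced_map[OF finQX(2)[OF that] svpos])
    then show "bprop (QY u) (sv u) (gY u)" unfolding gY_def by (rule someI_ex)
  qed
  define \<Sigma>X where "\<Sigma>X u = (if u = vs then \<Sigma> vs else {0..<sv u})" for u
  define hX where "hX u = (if u = vs then h vs else gX u)" for u
  define hY where "hY u = (if u = vs then h vs else if u = v0 then gY u else gX u)" for u
  have card\<Sigma>X: "card (\<Sigma>X u) = sv u" if "u \<noteq> vs" for u using that unfolding \<Sigma>X_def by simp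

  have finW: "finite (vbl c)" if "c \<in> C" for c
  proof -
    have "vbl c \<subseteq> V" using vblV that by blast
    then show ?thesis using finV by (rule finite_subset)
  qed
  have SV: "vs \<notin> S" "v0 \<notin> S" unfolding S_def by auto
  have flo_vs: "flo QX \<Sigma>X vs = flo Q \<Sigma> vs" "flo QY \<Sigma>X vs = flo Q \<Sigma> vs"
    unfolding flo_def \<Sigma>X_def QXvs by simp_all
  have num: "(\<forall>v\<in>vbl c. flo QZ \<Sigma>X v \<ge> 1) \<and>
     (\<Sum>v\<in>vbl c. log 2 (real_of_int (flo QZ \<Sigma>X v))) \<ge> (\<Sum>v\<in>vbl c. log 2 (real_of_int (flo Q \<Sigma> v))) / 8 - R \<and>
     (\<Sum>v\<in>vbl c. (if v = vs then log 2 (real_of_int (flo QZ \<Sigma>X v))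
            else log 2 (real (card (QZ v)) / real_of_int (cei QZ \<Sigma>X v))))
         \<ge> (\<Sum>v\<in>vbl c. log 2 (real_of_int (flo Q \<Sigma> v))) / 8 - R - 1/4"
    if c: "c \<in> C" and QZ: "QZ = QX \<or> QZ = QY" for c QZ
  proof -
    have fW: "\<forall>v\<in>vbl c. flo Q \<Sigma> v \<ge> 1" using entc c by blast
    have sS: "\<forall>v\<in>vbl c \<inter> S. (mX v = 2 \<or> mX v = 3) \<and> sv v = (if v \<in> T then 1 else mX v)"
      unfolding S_def sv_def by auto
    have sN: "\<forall>v\<in>vbl c - S. v \<noteq> vs \<longrightarrow> (if 4 \<le> \<mu> v then (2 \<le> sv v \<and> sv v * sv v \<le> \<mu> v \<and> \<mu> v < (sv v + 1) * (sv v + 1)) else sv v = 1)"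
      using sq unfolding sv_def by auto
    have nS: "\<forall>v\<in>vbl c - S. v \<noteq> vs \<longrightarrow> v \<noteq> v0 \<longrightarrow> \<mu> v \<noteq> 2 \<and> \<mu> v \<noteq> 3"
    proof (intro ballI impI)
      fix v assume v: "v \<in> vbl c - S" "v \<noteq> vs" "v \<noteq> v0"
      then have vV: "v \<in> V" using vblV c by auto
      then have "\<mu> v = mX v" using mXY[OF vV v(3)] unfolding \<mu>_def by simp
      then show "\<mu> v \<noteq> 2 \<and> \<mu> v \<noteq> 3" using v vV unfolding S_def by auto
    qed
    have QZc: "\<forall>v\<in>vbl c. v \<noteq> vs \<longrightarrow> card (\<Sigma>X v) = sv v \<and> \<mu> v \<le> card (QZ v) \<and> (v \<in> S \<longrightarrow> card (QZ v) = mX v) \<and> flo Q \<Sigma> v \<le> int (\<mu> v)"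
    proof (intro ballI impI)
      fix v assume v: "v \<in> vbl c" "v \<noteq> vs"
      then have vV: "v \<in> V" using vblV c by auto
      have "v \<in> S \<longrightarrow> card (QZ v) = mX v"
      proof
        assume "v \<in> S"
        then have "v \<noteq> v0" unfolding S_def by auto
        then show "card (QZ v) = mX v" using QZ QXY[OF vV] unfolding mX_def by auto
      qed
      moreover have "\<mu> v \<le> card (QZ v)" using QZ unfolding \<mu>_def mX_def mY_def by auto
      moreover have "flo Q \<Sigma> v \<le> int (\<mu> v)" using fle[OF vV v(2)] unfolding \<mu>_def by auto
      ultimately show "card (\<Sigma>X v) = sv v \<and> \<mu> v \<le> card (QZ v) \<and> (v \<in> S \<longrightarrow> card (QZ v) = mX v) \<and> flo Q \<Sigma> v \<le> int (\<mu> v)"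
        using card\<Sigma>X[OF v(2)] by blast
    qed
    have Zvs: "vs \<in> vbl c \<longrightarrow> QZ vs = Q vs \<and> \<Sigma>X vs = \<Sigma> vs" using QZ QXvs unfolding \<Sigma>X_def by auto
    have g: "\<not> Pc c (T \<inter> Ac c)" using Tgood c by blast
    have g1: "real (card (T \<inter> (vbl c \<inter> S))) \<ge> real (card (vbl c \<inter> S)) / 3 - R"
      and g2: "real (card ((vbl c \<inter> S) - T \<inter> (vbl c \<inter> S))) \<ge> real (card (vbl c \<inter> S)) / 3 - R"
      using g unfolding Pc_def Ac_def by auto
    note sn = scheme_numeric[where QZ=QZ and Q=Q and \<Sigma>Z=\<Sigma>X and \<Sigma>=\<Sigma> and W="vbl c" and S=S and T=T
       and s=sv and \<mu>=\<mu> and m=mX and va=v0 and vs=vs and R=R, OF finW[OF c] fW SV sS sN nS QZc Zvs g1 g2]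
    show ?thesis using sn by blast
  qed
  have fin_ineq: "x \<ge> \<beta> / 10 * (\<Sum>v\<in>vbl c. log 2 (real (card (Q v))))"
    if c: "c \<in> C" and x: "x \<ge> (\<Sum>v\<in>vbl c. log 2 (real_of_int (flo Q \<Sigma> v))) / 8 - R - 1/4" for c x
  proof (rule final_arith[OF assms(6) R3 _ _ _ x])
    show "(\<Sum>v\<in>vbl c. log 2 (real_of_int (flo Q \<Sigma> v))) \<ge> \<beta> * (\<Sum>v\<in>vbl c. log 2 (real (card (Q v))))"
      using entc c by blast
    show "(\<Sum>v\<in>vbl c. log 2 (real (card (Q v)))) \<ge> log 2 (1 / viol_prob Q C vbl)"
      using finC c finW finQ vblV by (intro L_bound) auto
    show "log 2 (1 / viol_prob Q C vbl) \<ge> 55 / \<beta> * R" using assms(16) unfolding R_def D_def by (simp add: add.commute)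
  qed
  have iv: "\<forall>c\<in>C. (\<forall>v\<in>vbl c. flo QX \<Sigma>X v \<ge> 1 \<and> flo QY \<Sigma>X v \<ge> 1) \<and>
       min (\<Sum>v\<in>vbl c. log 2 (real_of_int (flo QX \<Sigma>X v)))
           (\<Sum>v\<in>vbl c. log 2 (real_of_int (flo QY \<Sigma>X v)))
         \<ge> \<beta> / 10 * (\<Sum>v\<in>vbl c. log 2 (real (card (Q v))))"
  proof
    fix c assume c: "c \<in> C"
    note nX = num[OF c, of QX] and nY = num[OF c, of QY]
    have a: "(\<Sum>v\<in>vbl c. log 2 (real_of_int (flo QX \<Sigma>X v))) \<ge> \<beta> / 10 * (\<Sum>v\<in>vbl c. log 2 (real (card (Q v))))"
      using nX by (intro fin_ineq[OF c]) auto
    have b: "(\<Sum>v\<in>vbl c. log 2 (real_of_int (flo QY \<Sigma>X v))) \<ge> \<beta> / 10 * (\<Sum>v\<in>vbl c. log 2 (real (card (Q v))))"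
      using nY by (intro fin_ineq[OF c]) auto
    show "(\<forall>v\<in>vbl c. flo QX \<Sigma>X v \<ge> 1 \<and> flo QY \<Sigma>X v \<ge> 1) \<and>
       min (\<Sum>v\<in>vbl c. log 2 (real_of_int (flo QX \<Sigma>X v)))
           (\<Sum>v\<in>vbl c. log 2 (real_of_int (flo QY \<Sigma>X v)))
         \<ge> \<beta> / 10 * (\<Sum>v\<in>vbl c. log 2 (real (card (Q v))))"
      using a b nX nY by auto
  qed
  have ifsum_nvs: "(\<Sum>v\<in>vbl c. (if v = vs then log 2 (real_of_int (flo QZ \<Sigma>X v))
            else log 2 (real (card (QZ v)) / real_of_int (cei QZ \<Sigma>X v))))
     = (\<Sum>v\<in>vbl c. log 2 (real (card (QZ v)) / real_of_int (cei QZ \<Sigma>X v)))"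
    if "vs \<notin> vbl c" for c QZ using that by (intro sum.cong) auto
  have ifsum_vs: "(\<Sum>v\<in>vbl c. (if v = vs then log 2 (real_of_int (flo QZ \<Sigma>X v))
            else log 2 (real (card (QZ v)) / real_of_int (cei QZ \<Sigma>X v))))
     = log 2 (real_of_int (flo QZ \<Sigma>X vs)) + (\<Sum>v\<in>vbl c - {vs}. log 2 (real (card (QZ v)) / real_of_int (cei QZ \<Sigma>X v)))"
    if "vs \<in> vbl c" "c \<in> C" for c QZ
  proof -
    have "(\<Sum>v\<in>vbl c. (if v = vs then log 2 (real_of_int (flo QZ \<Sigma>X v))
            else log 2 (real (card (QZ v)) / real_of_int (cei QZ \<Sigma>X v))))
       = (if vs = vs then log 2 (real_of_int (flo QZ \<Sigma>X vs)) else log 2 (real (card (QZ vs)) / real_of_int (cei QZ \<Sigma>X vs)))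
         + (\<Sum>v\<in>vbl c - {vs}. (if v = vs then log 2 (real_of_int (flo QZ \<Sigma>X v))
            else log 2 (real (card (QZ v)) / real_of_int (cei QZ \<Sigma>X v))))"
      using that finW by (intro sum.remove) auto
    also have "(\<Sum>v\<in>vbl c - {vs}. (if v = vs then log 2 (real_of_int (flo QZ \<Sigma>X v))
            else log 2 (real (card (QZ v)) / real_of_int (cei QZ \<Sigma>X v))))
        = (\<Sum>v\<in>vbl c - {vs}. log 2 (real (card (QZ v)) / real_of_int (cei QZ \<Sigma>X v)))"
      by (intro sum.cong) auto
    finally show ?thesis by simp
  qed
  have v: "\<forall>c\<in>C. vs \<notin> vbl c \<longrightarrow>
       min (\<Sum>v\<in>vbl c. log 2 (real (card (QX v)) / real_of_int (cei QX \<Sigma>X v)))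
           (\<Sum>v\<in>vbl c. log 2 (real (card (QY v)) / real_of_int (cei QY \<Sigma>X v)))
         \<ge> \<beta> / 10 * (\<Sum>v\<in>vbl c. log 2 (real (card (Q v))))"
  proof (intro ballI impI)
    fix c assume c: "c \<in> C" and nvs: "vs \<notin> vbl c"
    have a: "(\<Sum>v\<in>vbl c. log 2 (real (card (QX v)) / real_of_int (cei QX \<Sigma>X v))) \<ge> \<beta> / 10 * (\<Sum>v\<in>vbl c. log 2 (real (card (Q v))))"
      using num[OF c, of QX] ifsum_nvs[OF nvs, of QX] by (intro fin_ineq[OF c]) auto
    have b: "(\<Sum>v\<in>vbl c. log 2 (real (card (QY v)) / real_of_int (cei QY \<Sigma>X v))) \<ge> \<beta> / 10 * (\<Sum>v\<in>vbl c. log 2 (real (card (Q v))))"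
      using num[OF c, of QY] ifsum_nvs[OF nvs, of QY] by (intro fin_ineq[OF c]) auto
    show "min (\<Sum>v\<in>vbl c. log 2 (real (card (QX v)) / real_of_int (cei QX \<Sigma>X v)))
           (\<Sum>v\<in>vbl c. log 2 (real (card (QY v)) / real_of_int (cei QY \<Sigma>X v)))
         \<ge> \<beta> / 10 * (\<Sum>v\<in>vbl c. log 2 (real (card (Q v))))" using a b by simp
  qed
  have vi: "\<forall>c\<in>C. vs \<in> vbl c \<longrightarrow>
       min (log 2 (real_of_int (flo QX \<Sigma>X vs)) +
              (\<Sum>v\<in>vbl c - {vs}. log 2 (real (card (QX v)) / real_of_int (cei QX \<Sigma>X v))))
           (log 2 (real_of_int (flo QY \<Sigma>X vs)) +
              (\<Sum>v\<in>vbl c - {vs}. log 2 (real (card (QY v)) / real_of_int (cei QY \<Sigma>X v))))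
         \<ge> \<beta> / 10 * (\<Sum>v\<in>vbl c. log 2 (real (card (Q v))))"
  proof (intro ballI impI)
    fix c assume c: "c \<in> C" and ivs: "vs \<in> vbl c"
    have a: "log 2 (real_of_int (flo QX \<Sigma>X vs)) +
              (\<Sum>v\<in>vbl c - {vs}. log 2 (real (card (QX v)) / real_of_int (cei QX \<Sigma>X v))) \<ge> \<beta> / 10 * (\<Sum>v\<in>vbl c. log 2 (real (card (Q v))))"
      using num[OF c, of QX] ifsum_vs[OF ivs c, of QX] by (intro fin_ineq[OF c]) auto
    have b: "log 2 (real_of_int (flo QY \<Sigma>X vs)) +
              (\<Sum>v\<in>vbl c - {vs}. log 2 (real (card (QY v)) / real_of_int (cei QY \<Sigma>X v))) \<ge> \<beta> / 10 * (\<Sum>v\<in>vbl c. log 2 (real (card (Q v))))"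
      using num[OF c, of QY] ifsum_vs[OF ivs c, of QY] by (intro fin_ineq[OF c]) auto
    show "min (log 2 (real_of_int (flo QX \<Sigma>X vs)) +
              (\<Sum>v\<in>vbl c - {vs}. log 2 (real (card (QX v)) / real_of_int (cei QX \<Sigma>X v))))
           (log 2 (real_of_int (flo QY \<Sigma>X vs)) +
              (\<Sum>v\<in>vbl c - {vs}. log 2 (real (card (QY v)) / real_of_int (cei QY \<Sigma>X v))))
         \<ge> \<beta> / 10 * (\<Sum>v\<in>vbl c. log 2 (real (card (Q v))))" using a b by simp
  qed
  have projX: "proj_scheme V QX \<Sigma>X hX" unfolding proj_scheme_def
  proof
    fix v assume v: "v \<in> V"
    show "finite (\<Sigma>X v) \<and> (\<forall>x\<in>QX v. hX v x \<in> \<Sigma>X v)"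
    proof (cases "v = vs")
      case True then show ?thesis using finS v QXvs unfolding \<Sigma>X_def hX_def by auto
    next
      case False then show ?thesis using gX[OF v] unfolding \<Sigma>X_def hX_def bprop_def by auto
    qed
  qed
  have projY: "proj_scheme V QY \<Sigma>X hY" unfolding proj_scheme_def
  proof
    fix v assume v: "v \<in> V"
    show "finite (\<Sigma>X v) \<and> (\<forall>x\<in>QY v. hY v x \<in> \<Sigma>X v)"
    proof (cases "v = vs")
      case True then show ?thesis using finS v QXvs unfolding \<Sigma>X_def hY_def by auto
    next
      case False
      show ?thesis
      proof (cases "v = v0")
        case True then show ?thesis using False gY[OF v] unfolding \<Sigma>X_def hY_def bprop_def by auto
      next
        case nv0: False then show ?thesis using False gX[OF v] QXY[OF v nv0] unfolding \<Sigma>X_def hY_def bprop_def by auto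
      qed
    qed
  qed
  have balvs: "flo Q \<Sigma> vs \<le> int (card {x\<in>Q vs. h vs x = y}) \<and> int (card {x\<in>Q vs. h vs x = y}) \<le> cei Q \<Sigma> vs"
    if "y \<in> \<Sigma> vs" for y using bal assms(14) that unfolding balanced_def by blast
  have cei_vs: "cei QX \<Sigma>X vs = cei Q \<Sigma> vs" "cei QY \<Sigma>X vs = cei Q \<Sigma> vs"
    unfolding cei_def \<Sigma>X_def QXvs by simp_all
  have balX: "balanced V QX \<Sigma>X hX" unfolding balanced_def
  proof (intro ballI)
    fix v y assume v: "v \<in> V" and y: "y \<in> \<Sigma>X v"
    show "flo QX \<Sigma>X v \<le> int (card {x \<in> QX v. hX v x = y}) \<and> int (card {x \<in> QX v. hX v x = y}) \<le> cei QX \<Sigma>X v"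
    proof (cases "v = vs")
      case True then show ?thesis using balvs y flo_vs cei_vs QXvs unfolding \<Sigma>X_def hX_def by auto
    next
      case False then show ?thesis using gX[OF v] y card\<Sigma>X[OF False] unfolding \<Sigma>X_def hX_def bprop_def flo_def cei_def by auto
    qed
  qed
  have balY: "balanced V QY \<Sigma>X hY" unfolding balanced_def
  proof (intro ballI)
    fix v y assume v: "v \<in> V" and y: "y \<in> \<Sigma>X v"
    show "flo QY \<Sigma>X v \<le> int (card {x \<in> QY v. hY v x = y}) \<and> int (card {x \<in> QY v. hY v x = y}) \<le> cei QY \<Sigma>X v"
    proof (cases "v = vs")
      case True then show ?thesis using balvs y flo_vs cei_vs QXvs unfolding \<Sigma>X_def hY_def by auto
    next
      case False
      show ?thesis
      proof (cases "v = v0")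
        case True then show ?thesis using False gY[OF v] y card\<Sigma>X[OF False] unfolding \<Sigma>X_def hY_def bprop_def flo_def cei_def by auto
      next
        case nv0: False then show ?thesis using False gX[OF v] y card\<Sigma>X[OF False] QXY[OF v nv0]
          unfolding \<Sigma>X_def hY_def bprop_def flo_def cei_def by auto
      qed
    qed
  qed
  have ii: "\<forall>u\<in>V. u \<noteq> v0 \<longrightarrow> \<Sigma>X u = \<Sigma>X u \<and> (\<forall>x\<in>QX u. hX u x = hY u x)"
    unfolding hX_def hY_def by auto
  have iii: "\<Sigma>X vs = \<Sigma> vs \<and> \<Sigma>X vs = \<Sigma> vs \<and> (\<forall>x\<in>Q vs. hX vs x = h vs x \<and> hY vs x = h vs x)"
    unfolding \<Sigma>X_def hX_def hY_def by auto
  have "proj_scheme V QX \<Sigma>X hX \<and> proj_scheme V QY \<Sigma>X hY \<and>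
        coupling_condition V Q C vbl \<Sigma> h \<beta> v0 vs QX QY \<Sigma>X hX \<Sigma>X hY"
    unfolding coupling_condition_def using projX projY balX balY ii iii iv v vi by blast
  then show ?thesis unfolding QX_def QY_def by blast
qed

end
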